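(* Let $Y\subseteq\mathbb{R}$ be a Delone set. Let $\psi:\mathbb{N}\to[0,\infty)$ be any function, and let $\alpha$ be a real number with $|\alpha|>1$. If $\sum_{n=1}^\infty \psi(n)<\infty$, then for Lebesgue-almost every $x\in\mathbb{R}$ there are only finitely many pairs $(n,y)$ with $n\in\mathbb{N}$ and $y\in Y$ such that $|\alpha^n x - y|\le \psi(n)$. On the other hand, if $\sum_{n=1}^\infty \psi(n)=\infty$, then for Lebesgue-almost every $x\in\mathbb{R}$ there are infinitely many pairs $(n,y)$ with $n\in\mathbb{N}$ and $y\in Y$ such that $|\alpha^n x - y|\le \psi(n)$.
   Context: A Delone set in $\mathbb{R}$ is a set $Y\subseteq\mathbb{R}$ that is uniformly discrete and relatively dense: there exist $r>0$ (packing radius) such that distinct points of $Y$ are at distance at least $2r$ from each other (equivalently, closed balls of radius $r$ around points of $Y$ have pairwise disjoint interiors), and $R>0$ (covering radius) such that every closed ball of radius $R$ in $\mathbb{R}$ contains a point of $Y$. Here $\mathbb{N}=\{1,2,3,\dots\}$. *)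

theory Defs
  imports "HOL-Analysis.Analysis"
begin

definition uniformly_discrete :: "real set \<Rightarrow> bool" where
  "uniformly_discrete Y \<longleftrightarrow>
     (\<exists>r>0. \<forall>y\<in>Y. \<forall>y'\<in>Y. y \<noteq> y' \<longrightarrow> dist y y' \<ge> 2 * r)"

definition relatively_dense :: "real set \<Rightarrow> bool" where
  "relatively_dense Y \<longleftrightarrow> (\<exists>R>0. \<forall>z. cball z R \<inter> Y \<noteq> {})"

definition delone :: "real set \<Rightarrow> bool" where
  "delone Y \<longleftrightarrow> uniformly_discrete Y \<and> relatively_dense Y"

definition approx_pairs :: "real set \<Rightarrow> (nat \<Rightarrow> real) \<Rightarrow> real \<Rightarrow> real \<Rightarrow> (nat \<times> real) set" where
  "approx_pairs Y \<psi> \<alpha> x = {(n, y). n \<ge> 1 \<and> y \<in> Y \<and> \<bar>\<alpha> ^ n * x - y\<bar> \<le> \<psi> n}"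

end

theory Submission
  imports Defs
begin

lemma floor_eq_abs_lt: fixes a b :: real assumes "\<lfloor>a\<rfloor> = \<lfloor>b\<rfloor>" shows "\<bar>a - b\<bar> < 1"
proof -
  have "of_int \<lfloor>a\<rfloor> \<le> a" "a < of_int \<lfloor>a\<rfloor> + 1" "of_int \<lfloor>b\<rfloor> \<le> b" "b < of_int \<lfloor>b\<rfloor> + 1"
    by (simp_all add: of_int_floor_le real_of_int_floor_add_one_gt)
  moreover have "(of_int \<lfloor>a\<rfloor> :: real) = of_int \<lfloor>b\<rfloor>" using assms by simp
  ultimately show ?thesis unfolding abs_less_iff by linarith
qed
lemma div_abs_lt: fixes x s :: real assumes "s > 0" "\<bar>x / s\<bar> < 1" shows "\<bar>x\<bar> < s"
proof -
  have "\<bar>x / s\<bar> = \<bar>x\<bar> / s" using assms(1) by (simp add: abs_divide)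
  then show ?thesis using assms by (simp add: pos_divide_less_eq)
qed
lemma count_upper:
  fixes Z :: "real set"
  assumes sep: "\<forall>z\<in>Z. \<forall>w\<in>Z. z \<noteq> w \<longrightarrow> s \<le> \<bar>z - w\<bar>" and s: "s > 0" and pq: "p \<le> q"
  shows "finite (Z \<inter> {p..q})" "real (card (Z \<inter> {p..q})) \<le> (q - p) / s + 1"
proof -
  define f where "f z = nat \<lfloor>(z - p) / s\<rfloor>" for z
  have inj: "inj_on f (Z \<inter> {p..q})"
  proof (rule inj_onI)
    fix z w assume z: "z \<in> Z \<inter> {p..q}" and w: "w \<in> Z \<inter> {p..q}" and e: "f z = f w"
    have "0 \<le> (z - p) / s" "0 \<le> (w - p) / s" using z w s by auto
    then have "\<lfloor>(z - p) / s\<rfloor> = \<lfloor>(w - p) / s\<rfloor>" using e unfolding f_def by (simp add: eq_nat_nat_iff)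
    then have "\<bar>(z - p) / s - (w - p) / s\<bar> < 1" by (rule floor_eq_abs_lt)
    then have "\<bar>(z - w) / s\<bar> < 1" by (simp add: diff_divide_distrib)
    then have "\<bar>z - w\<bar> < s" by (rule div_abs_lt[OF s])
    show "z = w"
    proof (rule ccontr)
      assume "z \<noteq> w"
      then have "s \<le> \<bar>z - w\<bar>" using sep z w by blast
      then show False using \<open>\<bar>z - w\<bar> < s\<close> by linarith
    qed
  qed
  have sub: "f ` (Z \<inter> {p..q}) \<subseteq> {0..nat \<lfloor>(q - p) / s\<rfloor>}"
  proof
    fix k assume "k \<in> f ` (Z \<inter> {p..q})"
    then obtain z where z: "z \<in> Z \<inter> {p..q}" and k: "k = f z" by auto
    have "(z - p) / s \<le> (q - p) / s" using z s by (simp add: divide_right_mono)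
    then have "\<lfloor>(z - p) / s\<rfloor> \<le> \<lfloor>(q - p) / s\<rfloor>" by (rule floor_mono)
    then show "k \<in> {0..nat \<lfloor>(q - p) / s\<rfloor>}" using k unfolding f_def by auto
  qed
  show "finite (Z \<inter> {p..q})"
    by (rule inj_on_finite[OF inj sub]) simp
  have "card (Z \<inter> {p..q}) \<le> card {0..nat \<lfloor>(q - p) / s\<rfloor>}"
    by (rule card_inj_on_le[OF inj sub]) simp
  also have "\<dots> = nat \<lfloor>(q - p) / s\<rfloor> + 1" by simp
  finally have "real (card (Z \<inter> {p..q})) \<le> real (nat \<lfloor>(q - p) / s\<rfloor>) + 1" by linarith
  also have "real (nat \<lfloor>(q - p) / s\<rfloor>) \<le> (q - p) / s"
    using pq s by (simp add: of_nat_nat)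
  finally show "real (card (Z \<inter> {p..q})) \<le> (q - p) / s + 1" by simp
qed

lemma count_lower:
  fixes Z :: "real set"
  assumes sep: "\<forall>z\<in>Z. \<forall>w\<in>Z. z \<noteq> w \<longrightarrow> s \<le> \<bar>z - w\<bar>" and s: "s > 0" and pq: "p \<le> q"
    and cov: "\<forall>x. \<exists>z\<in>Z. \<bar>z - x\<bar> \<le> S" and S: "S > 0"
  shows "(q - p) / (3 * S) - 1 \<le> real (card (Z \<inter> {p..q}))"
proof -
  define K where "K = nat \<lfloor>(q - p) / (3 * S)\<rfloor>"
  have K: "real K \<le> (q - p) / (3 * S)" "(q - p) / (3 * S) - 1 \<le> real K"
    unfolding K_def using pq S by (auto simp: of_nat_nat)
  define g where "g k = (SOME z. z \<in> Z \<and> \<bar>z - (p + S + 3 * S * real k)\<bar> \<le> S)" for k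
  have g: "g k \<in> Z \<and> \<bar>g k - (p + S + 3 * S * real k)\<bar> \<le> S" for k
    unfolding g_def by (rule someI_ex) (use cov in blast)
  have gl: "p + 3 * S * real k \<le> g k" and gu: "g k \<le> p + 3 * S * real k + 2 * S" for k
    using g[of k] unfolding abs_le_iff by linarith+
  have inj: "inj_on g {..<K}"
  proof (rule linorder_inj_onI')
    fix i j :: nat assume "i < j"
    then have "real i + 1 \<le> real j" by simp
    then have "3 * S * real i + 3 * S \<le> 3 * S * real j" using S
      by (metis distrib_left mult.right_neutral mult_le_cancel_left_pos zero_less_mult_iff zero_less_numeral)
    then show "g i \<noteq> g j" using gu[of i] gl[of j] S by linarith
  qed
  have sub: "g ` {..<K} \<subseteq> Z \<inter> {p..q}"
  proof
    fix z assume "z \<in> g ` {..<K}"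
    then obtain k where k: "k < K" "z = g k" by auto
    have "real k + 1 \<le> real K" using k by simp
    then have "3 * S * (real k + 1) \<le> 3 * S * real K" using S by simp
    also have "\<dots> \<le> q - p" using K(1) S by (simp add: field_simps)
    finally have "3 * S * real k + 3 * S \<le> q - p" by (simp add: algebra_simps)
    moreover have "0 \<le> 3 * S * real k" using S by simp
    ultimately have "p \<le> g k" "g k \<le> q" using gl[of k] gu[of k] by linarith+
    then show "z \<in> Z \<inter> {p..q}" using g[of k] k by auto
  qed
  have fin: "finite (Z \<inter> {p..q})" using count_upper[OF sep s pq] by simp
  have "K = card (g ` {..<K})" using inj by (simp add: card_image)
  also have "\<dots> \<le> card (Z \<inter> {p..q})" using sub fin by (rule card_mono[rotated])
  finally show ?thesis using K(2) by linarith
qed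

definition nbhd :: "real set \<Rightarrow> real \<Rightarrow> real set" where
  "nbhd Z \<rho> = (\<Union>z\<in>Z. cball z \<rho>)"

lemma cball_fmeas: "cball (z::real) \<rho> \<in> fmeasurable lborel"
  unfolding cball_eq_atLeastAtMost fmeasurable_def by (simp add: emeasure_lborel_Icc_eq)

lemma measure_cball_real: "0 \<le> \<rho> \<Longrightarrow> measure lborel (cball (z::real) \<rho>) = 2 * \<rho>"
  unfolding cball_eq_atLeastAtMost by simp

lemma union_cball_bound:
  assumes "finite A" "0 \<le> \<rho>"
  shows "measure lborel (\<Union>z\<in>A. cball (z::real) \<rho>) \<le> real (card A) * (2 * \<rho>)"
proof -
  have "measure lborel (\<Union>z\<in>A. cball (z::real) \<rho>) \<le> (\<Sum>z\<in>A. measure lborel (cball z \<rho>))"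
    by (rule measure_UNION_le) (use assms in auto)
  also have "\<dots> = real (card A) * (2 * \<rho>)" using assms by (simp add: measure_cball_real)
  finally show ?thesis .
qed

lemma union_cball_fmeas:
  assumes "finite A"
  shows "(\<Union>z\<in>A. cball (z::real) \<rho>) \<in> fmeasurable lborel"
  using assms by (intro fmeasurable.finite_UN) (auto intro: cball_fmeas)

lemma nbhd_Int_Icc:
  fixes Z :: "real set"
  assumes sep: "\<forall>z\<in>Z. \<forall>w\<in>Z. z \<noteq> w \<longrightarrow> s \<le> \<bar>z - w\<bar>" and s: "s > 0" and pq: "p \<le> q" and r: "0 \<le> \<rho>"
  shows "nbhd Z \<rho> \<inter> {p..q} = (\<Union>z\<in>Z \<inter> {p - \<rho>..q + \<rho>}. cball z \<rho>) \<inter> {p..q}"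
    and "finite (Z \<inter> {p - \<rho>..q + \<rho>})"
    and "nbhd Z \<rho> \<inter> {p..q} \<in> fmeasurable lborel"
proof -
  show 1: "nbhd Z \<rho> \<inter> {p..q} = (\<Union>z\<in>Z \<inter> {p - \<rho>..q + \<rho>}. cball z \<rho>) \<inter> {p..q}"
    unfolding nbhd_def by (auto simp: dist_real_def abs_le_iff)
  show 2: "finite (Z \<inter> {p - \<rho>..q + \<rho>})"
    using count_upper[OF sep s, of "p - \<rho>" "q + \<rho>"] pq r by simp
  show "nbhd Z \<rho> \<inter> {p..q} \<in> fmeasurable lborel"
    unfolding 1 by (intro fmeasurable.Int union_cball_fmeas 2) (simp add: fmeasurable_def emeasure_lborel_Icc_eq)
qed


lemma meas_upper:
  fixes Z :: "real set"
  assumes sep: "\<forall>z\<in>Z. \<forall>w\<in>Z. z \<noteq> w \<longrightarrow> s \<le> \<bar>z - w\<bar>" and s: "s > 0" and pq: "p \<le> q" and r: "0 \<le> \<rho>"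
  shows "measure lborel (nbhd Z \<rho> \<inter> {p..q}) \<le> ((q - p + 2 * \<rho>) / s + 1) * (2 * \<rho>)"
proof -
  let ?A = "Z \<inter> {p - \<rho>..q + \<rho>}"
  have fin: "finite ?A" using nbhd_Int_Icc[OF sep s pq r] by simp
  have "measure lborel (nbhd Z \<rho> \<inter> {p..q}) \<le> measure lborel (\<Union>z\<in>?A. cball z \<rho>)"
    by (rule measure_mono_fmeasurable) (use nbhd_Int_Icc[OF sep s pq r] union_cball_fmeas[OF fin] in auto)
  also have "\<dots> \<le> real (card ?A) * (2 * \<rho>)" by (rule union_cball_bound[OF fin r])
  also have "\<dots> \<le> ((q - p + 2 * \<rho>) / s + 1) * (2 * \<rho>)"
  proof (rule mult_right_mono)
    show "real (card ?A) \<le> (q - p + 2 * \<rho>) / s + 1"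
      using count_upper(2)[OF sep s, of "p - \<rho>" "q + \<rho>"] pq r by (simp add: algebra_simps)
  qed (use r in simp)
  finally show ?thesis .
qed

lemma meas_lower:
  fixes Z :: "real set"
  assumes sep: "\<forall>z\<in>Z. \<forall>w\<in>Z. z \<noteq> w \<longrightarrow> s \<le> \<bar>z - w\<bar>" and s: "s > 0"
    and cov: "\<forall>x. \<exists>z\<in>Z. \<bar>z - x\<bar> \<le> S" and S: "S > 0"
    and r: "0 \<le> \<rho>" "2 * \<rho> < s" and pq: "p + 2 * \<rho> \<le> q"
  shows "((q - p - 2 * \<rho>) / (3 * S) - 1) * (2 * \<rho>) \<le> measure lborel (nbhd Z \<rho> \<inter> {p..q})"
proof -
  let ?A = "Z \<inter> {p + \<rho>..q - \<rho>}"
  have pq': "p + \<rho> \<le> q - \<rho>" using pq by simp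
  have fin: "finite ?A" using count_upper(1)[OF sep s pq'] .
  have disj: "pairwise (\<lambda>i j. disjnt (cball i \<rho>) (cball j \<rho>)) ?A"
  proof (rule pairwiseI)
    fix i j assume ij: "i \<in> ?A" "j \<in> ?A" "i \<noteq> j"
    then have "s \<le> \<bar>i - j\<bar>" using sep by blast
    then show "disjnt (cball i \<rho>) (cball j \<rho>)"
      using r unfolding disjnt_def by (auto simp: dist_real_def abs_le_iff abs_if split: if_splits)
  qed
  have "measure lborel (\<Union>z\<in>?A. cball z \<rho>) = (\<Sum>z\<in>?A. measure lborel (cball z \<rho>))"
    by (rule measure_UNION'[OF fin _ disj]) (rule cball_fmeas)
  also have "\<dots> = real (card ?A) * (2 * \<rho>)" using r by (simp add: measure_cball_real)
  finally have eq: "measure lborel (\<Union>z\<in>?A. cball z \<rho>) = real (card ?A) * (2 * \<rho>)" .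
  have "((q - p - 2 * \<rho>) / (3 * S) - 1) * (2 * \<rho>) \<le> real (card ?A) * (2 * \<rho>)"
  proof (rule mult_right_mono)
    show "(q - p - 2 * \<rho>) / (3 * S) - 1 \<le> real (card ?A)"
      using count_lower[OF sep s pq' cov S] by (simp add: algebra_simps)
  qed (use r in simp)
  also have "\<dots> = measure lborel (\<Union>z\<in>?A. cball z \<rho>)" using eq by simp
  also have "\<dots> \<le> measure lborel (nbhd Z \<rho> \<inter> {p..q})"
  proof (rule measure_mono_fmeasurable)
    show "(\<Union>z\<in>?A. cball z \<rho>) \<subseteq> nbhd Z \<rho> \<inter> {p..q}"
      unfolding nbhd_def by (auto simp: dist_real_def abs_le_iff)
    have "p \<le> q" using pq r by simp
    then show "nbhd Z \<rho> \<inter> {p..q} \<in> fmeasurable lborel"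
      using nbhd_Int_Icc(3)[OF sep s _ r(1)] by blast
    show "(\<Union>z\<in>?A. cball z \<rho>) \<in> sets lborel"
      using fmeasurableD[OF union_cball_fmeas[OF fin]] .
  qed
  finally show ?thesis .
qed

lemma meas_pair:
  fixes Z1 Z2 :: "real set"
  assumes sep1: "\<forall>z\<in>Z1. \<forall>w\<in>Z1. z \<noteq> w \<longrightarrow> s1 \<le> \<bar>z - w\<bar>" and s1: "s1 > 0"
    and sep2: "\<forall>z\<in>Z2. \<forall>w\<in>Z2. z \<noteq> w \<longrightarrow> s2 \<le> \<bar>z - w\<bar>" and s2: "s2 > 0"
    and pq: "p \<le> q" and r1: "0 \<le> \<rho>1" and r2: "0 \<le> \<rho>2"
  shows "measure lborel (nbhd Z1 \<rho>1 \<inter> nbhd Z2 \<rho>2 \<inter> {p..q})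
     \<le> ((q - p + 2 * \<rho>1) / s1 + 1) * (((2 * \<rho>1 + 2 * \<rho>2) / s2 + 1) * (2 * \<rho>2))"
proof -
  let ?A = "Z1 \<inter> {p - \<rho>1..q + \<rho>1}"
  let ?B = "\<lambda>z. Z2 \<inter> {z - \<rho>1 - \<rho>2..z + \<rho>1 + \<rho>2}"
  have finA: "finite ?A" using nbhd_Int_Icc[OF sep1 s1 pq r1] by simp
  have finB: "finite (?B z)" for z using count_upper(1)[OF sep2 s2, of "z - \<rho>1 - \<rho>2" "z + \<rho>1 + \<rho>2"] r1 r2 by simp
  have cardB: "real (card (?B z)) \<le> (2 * \<rho>1 + 2 * \<rho>2) / s2 + 1" for z
    using count_upper(2)[OF sep2 s2, of "z - \<rho>1 - \<rho>2" "z + \<rho>1 + \<rho>2"] r1 r2 by (simp add: algebra_simps)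
  have sub: "nbhd Z1 \<rho>1 \<inter> nbhd Z2 \<rho>2 \<inter> {p..q} \<subseteq> (\<Union>z\<in>?A. \<Union>w\<in>?B z. cball w \<rho>2)"
  proof
    fix x assume "x \<in> nbhd Z1 \<rho>1 \<inter> nbhd Z2 \<rho>2 \<inter> {p..q}"
    then obtain z w where z: "z \<in> Z1" "\<bar>z - x\<bar> \<le> \<rho>1" and w: "w \<in> Z2" "\<bar>w - x\<bar> \<le> \<rho>2"
      and x: "p \<le> x" "x \<le> q"
      unfolding nbhd_def by (auto simp: dist_real_def)
    have "z \<in> ?A" using z x unfolding abs_le_iff by auto
    moreover have "w \<in> ?B z" using z w unfolding abs_le_iff by auto
    moreover have "x \<in> cball w \<rho>2" using w by (simp add: dist_real_def)
    ultimately show "x \<in> (\<Union>z\<in>?A. \<Union>w\<in>?B z. cball w \<rho>2)" by blast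
  qed
  have m1: "nbhd Z1 \<rho>1 \<inter> nbhd Z2 \<rho>2 \<inter> {p..q} \<in> sets lborel"
  proof -
    have "nbhd Z1 \<rho>1 \<inter> nbhd Z2 \<rho>2 \<inter> {p..q} = (nbhd Z1 \<rho>1 \<inter> {p..q}) \<inter> (nbhd Z2 \<rho>2 \<inter> {p..q})" by auto
    then show ?thesis using nbhd_Int_Icc(3)[OF sep1 s1 pq r1] nbhd_Int_Icc(3)[OF sep2 s2 pq r2]
      by (auto dest: fmeasurableD)
  qed
  have fm: "(\<Union>z\<in>?A. \<Union>w\<in>?B z. cball w \<rho>2) \<in> fmeasurable lborel"
    by (intro fmeasurable.finite_UN finA union_cball_fmeas finB)
  have "measure lborel (nbhd Z1 \<rho>1 \<inter> nbhd Z2 \<rho>2 \<inter> {p..q}) \<le> measure lborel (\<Union>z\<in>?A. \<Union>w\<in>?B z. cball w \<rho>2)"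
    by (rule measure_mono_fmeasurable[OF sub m1 fm])
  also have "\<dots> \<le> (\<Sum>z\<in>?A. measure lborel (\<Union>w\<in>?B z. cball w \<rho>2))"
    by (rule measure_UNION_le[OF finA]) (rule fmeasurableD[OF union_cball_fmeas[OF finB]])
  also have "\<dots> \<le> (\<Sum>z\<in>?A. ((2 * \<rho>1 + 2 * \<rho>2) / s2 + 1) * (2 * \<rho>2))"
  proof (rule sum_mono)
    fix z
    have "measure lborel (\<Union>w\<in>?B z. cball w \<rho>2) \<le> real (card (?B z)) * (2 * \<rho>2)"
      by (rule union_cball_bound[OF finB r2])
    also have "\<dots> \<le> ((2 * \<rho>1 + 2 * \<rho>2) / s2 + 1) * (2 * \<rho>2)"
      by (rule mult_right_mono[OF cardB]) (use r2 in simp)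
    finally show "measure lborel (\<Union>w\<in>?B z. cball w \<rho>2) \<le> ((2 * \<rho>1 + 2 * \<rho>2) / s2 + 1) * (2 * \<rho>2)" .
  qed
  also have "\<dots> = real (card ?A) * (((2 * \<rho>1 + 2 * \<rho>2) / s2 + 1) * (2 * \<rho>2))" by simp
  also have "\<dots> \<le> ((q - p + 2 * \<rho>1) / s1 + 1) * (((2 * \<rho>1 + 2 * \<rho>2) / s2 + 1) * (2 * \<rho>2))"
  proof (rule mult_right_mono)
    show "real (card ?A) \<le> (q - p + 2 * \<rho>1) / s1 + 1"
      using count_upper(2)[OF sep1 s1, of "p - \<rho>1" "q + \<rho>1"] pq r1 by (simp add: algebra_simps)
    show "0 \<le> ((2 * \<rho>1 + 2 * \<rho>2) / s2 + 1) * (2 * \<rho>2)" using r1 r2 s2 by simp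
  qed
  finally show ?thesis .
qed

lemma fmeas_integrable: "A \<in> fmeasurable M \<Longrightarrow> integrable M (indicator A :: _ \<Rightarrow> real)"
  by (auto simp: fmeasurable_def)

lemma chung_erdos:
  fixes A :: "nat \<Rightarrow> real set"
  assumes J: "finite J" and fm: "\<And>n. n \<in> J \<Longrightarrow> A n \<in> fmeasurable lborel"
    and B1: "0 < B1" "B1 \<le> (\<Sum>n\<in>J. measure lborel (A n))"
    and B2: "(\<Sum>m\<in>J. \<Sum>n\<in>J. measure lborel (A m \<inter> A n)) \<le> B2"
  shows "B1^2 / B2 \<le> measure lborel (\<Union>n\<in>J. A n)"
proof (cases "B2 > 0")
  case False
  then have "B1^2 / B2 \<le> 0" by (simp add: divide_nonneg_nonpos)
  then show ?thesis by (meson measure_nonneg order_trans)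
next
  case True
  define U where "U = (\<Union>n\<in>J. A n)"
  have fmU: "U \<in> fmeasurable lborel" unfolding U_def using J fm by (intro fmeasurable.finite_UN) auto
  have fmI: "A m \<inter> A n \<in> fmeasurable lborel" if "m \<in> J" "n \<in> J" for m n
    using fm[OF that(1)] fm[OF that(2)] by (intro fmeasurable.Int) auto
  define t where "t = B2 / (2 * B1)"
  have t: "t > 0" unfolding t_def using True B1 by simp
  define f where "f x = (\<Sum>n\<in>J. indicator (A n) x :: real)" for x
  define g where "g x = (\<Sum>m\<in>J. \<Sum>n\<in>J. indicator (A m \<inter> A n) x :: real)" for x
  have fg: "g x = (f x)^2" for x
    unfolding f_def g_def power2_eq_square sum_product by (simp add: indicator_inter_arith)
  have f0: "0 \<le> f x" for x unfolding f_def by (simp add: sum_nonneg)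
  have pw: "f x \<le> t * indicator U x + g x / (4 * t)" for x
  proof (cases "x \<in> U")
    case True
    have "0 \<le> (f x - 2 * t)^2" by simp
    then have "4 * t * f x \<le> 4 * t * t + (f x)^2" by (simp add: power2_eq_square algebra_simps)
    then have "f x \<le> t + (f x)^2 / (4 * t)" using t by (simp add: field_simps)
    then show ?thesis using True fg by simp
  next
    case False
    then have "f x = 0" unfolding f_def U_def by (auto intro!: sum.neutral)
    then show ?thesis using False fg by simp
  qed
  have intf: "integrable lborel f" unfolding f_def using fm by (intro Bochner_Integration.integrable_sum fmeas_integrable)
  have intg: "integrable lborel g" unfolding g_def using fmI by (intro Bochner_Integration.integrable_sum fmeas_integrable)
  have intU: "integrable lborel (indicator U :: real \<Rightarrow> real)" by (rule fmeas_integrable[OF fmU])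
  have "integral\<^sup>L lborel f = (\<Sum>n\<in>J. measure lborel (A n))"
    unfolding f_def using fm by (subst Bochner_Integration.integral_sum) (auto intro: fmeas_integrable)
  moreover have "integral\<^sup>L lborel g = (\<Sum>m\<in>J. \<Sum>n\<in>J. measure lborel (A m \<inter> A n))"
    unfolding g_def using fmI
    by (simp add: Bochner_Integration.integral_sum Bochner_Integration.integrable_sum fmeas_integrable)
  moreover have "integral\<^sup>L lborel f \<le> integral\<^sup>L lborel (\<lambda>x. t * indicator U x + g x / (4 * t))"
    by (rule integral_mono[OF intf _ pw]) (use intU intg in auto)
  moreover have "integral\<^sup>L lborel (\<lambda>x. t * indicator U x + g x / (4 * t)) = t * measure lborel U + integral\<^sup>L lborel g / (4 * t)"
    using intU intg by simp
  ultimately have "B1 \<le> t * measure lborel U + B2 / (4 * t)"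
    using B1 B2 t by (smt (verit) divide_right_mono mult_pos_pos zero_less_numeral)
  also have "B2 / (4 * t) = B1 / 2" unfolding t_def using True B1 by (simp add: field_simps)
  finally have "B1 / 2 \<le> t * measure lborel U" by simp
  then have "B1 / 2 \<le> B2 / (2 * B1) * measure lborel U" unfolding t_def .
  then have "B1 * B1 \<le> B2 * measure lborel U" using B1 by (simp add: field_simps)
  then show ?thesis unfolding U_def[symmetric] using True by (simp add: power2_eq_square pos_divide_le_eq mult.commute)
qed

lemma ball_dens:
  fixes W :: "real set"
  assumes W: "W \<in> sets borel" and dens: "\<And>u v. u < v \<Longrightarrow> \<eta> * (v - u) \<le> measure lborel (W \<inter> {u..v})"
    and d: "d > 0"
  shows "\<eta> / 2 * measure lebesgue (ball x d) \<le> measure lebesgue (W \<inter> ball x d)"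
proof -
  have bb: "ball x d \<in> sets lborel" by simp
  have mb: "measure lebesgue (ball x d) = 2 * d"
    using bb d by (simp add: ball_eq_greaterThanLessThan)
  have fb: "ball x d \<in> fmeasurable lborel"
    using d by (simp add: ball_eq_greaterThanLessThan fmeasurable_def emeasure_lborel_Ioo)
  have "\<eta> * d \<le> measure lborel (W \<inter> {x - d/2..x + d/2})"
    using dens[of "x - d/2" "x + d/2"] d by simp
  also have "\<dots> \<le> measure lborel (W \<inter> ball x d)"
  proof (rule measure_mono_fmeasurable)
    show "W \<inter> {x - d / 2..x + d / 2} \<subseteq> W \<inter> ball x d" using d by (auto simp: dist_real_def)
    show "W \<inter> {x - d / 2..x + d / 2} \<in> sets lborel" using W by simp
    show "W \<inter> ball x d \<in> fmeasurable lborel"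
      using fmeasurable_Int_fmeasurable[OF fb, of W] W by (simp add: Int_commute)
  qed
  also have "\<dots> = measure lebesgue (W \<inter> ball x d)" using W by simp
  finally show ?thesis using mb by simp
qed

lemma density_ae:
  fixes W :: "real set"
  assumes W: "W \<in> sets borel" and \<eta>: "\<eta> > 0"
    and dens: "\<And>u v. u < v \<Longrightarrow> \<eta> * (v - u) \<le> measure lborel (W \<inter> {u..v})"
  shows "AE x in lborel. x \<in> W"
proof -
  have bd: "\<eta> / 2 * measure lebesgue (ball x d) \<le> measure lebesgue (W \<inter> ball x d)" if "d > 0" for x d
    by (rule ball_dens[OF W dens that])
  have Wl: "W \<in> sets lebesgue" using W by simp
  have neg: "negligible ((- W) \<inter> ball 0 (real k))" for k :: nat
    unfolding negligible_outer_le
  proof (intro allI impI)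
    fix e :: real assume e: "e > 0"
    define S where "S = (- W) \<inter> ball 0 (real k)"
    have "S = ball 0 (real k) - W" unfolding S_def by auto
    then have Sl: "S \<in> sets lebesgue" using Wl by (simp add: sets.Diff fmeasurableD)
    obtain T0 where T0: "open T0" "S \<subseteq> T0" "(T0 - S) \<in> lmeasurable" "emeasure lebesgue (T0 - S) < ennreal (e * \<eta> / 2)"
      using sets_lebesgue_outer_open[OF Sl, of "e * \<eta> / 2"] e \<eta> by auto
    define G where "G = T0 \<inter> ball 0 (real k)"
    have G: "open G" "S \<subseteq> G" unfolding G_def S_def using T0 by (auto simp: S_def)
    have GS: "measure lebesgue (G - S) \<le> e * \<eta> / 2"
    proof -
      have "measure lebesgue (G - S) \<le> measure lebesgue (T0 - S)"
        by (rule measure_mono_fmeasurable) (use T0 Sl G in \<open>auto simp: G_def\<close>)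
      also have "\<dots> \<le> e * \<eta> / 2"
      proof -
        have "emeasure lebesgue (T0 - S) \<noteq> top" using T0(3) by (rule fmeasurableD2)
        then have "ennreal (measure lebesgue (T0 - S)) < ennreal (e * \<eta> / 2)"
          using T0(4) by (simp add: emeasure_eq_ennreal_measure)
        then show ?thesis using e \<eta> by (simp add: ennreal_less_iff)
      qed
      finally show ?thesis .
    qed
    have GSm: "G - S \<in> lmeasurable"
      by (rule fmeasurableI2[OF T0(3)]) (use G Sl in \<open>auto simp: G_def\<close>)
    define K where "K = {(x, d). d > 0 \<and> ball x d \<subseteq> G}"
    obtain C where C: "countable C" "C \<subseteq> K"
      "pairwise (\<lambda>i j. disjnt (ball (fst i) (snd i)) (ball (fst j) (snd j))) C"
      "negligible (S - (\<Union>i\<in>C. ball (fst i) (snd i)))"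
    proof (rule Vitali_covering_theorem_balls[of S K fst snd])
      fix x and d :: real assume x: "x \<in> S" and d: "0 < d"
      then have "x \<in> G" using G by auto
      then obtain d' where d': "d' > 0" "ball x d' \<subseteq> G" using G(1) by (meson openE)
      show "\<exists>i. i \<in> K \<and> x \<in> ball (fst i) (snd i) \<and> snd i < d"
        by (rule exI[of _ "(x, min d' (d/2))"]) (use d d' in \<open>auto simp: K_def\<close>)
    qed blast
    let ?B = "\<lambda>i. ball (fst i) (snd i)"
    have bound: "measure lebesgue (\<Union>i\<in>I. ?B i) \<le> e" if I: "I \<subseteq> C" "finite I" for I
    proof -
      have pos: "snd i > 0" if "i \<in> I" for i using that I C(2) by (auto simp: K_def)
      have dI: "pairwise (\<lambda>i j. disjnt (?B i) (?B j)) I" using C(3) I(1) by (rule pairwise_subset)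
      have dI2: "pairwise (\<lambda>i j. disjnt (W \<inter> ?B i) (W \<inter> ?B j)) I"
        using dI unfolding pairwise_def disjnt_def by blast
      have "measure lebesgue (\<Union>i\<in>I. ?B i) = (\<Sum>i\<in>I. measure lebesgue (?B i))"
        by (rule measure_UNION'[OF I(2) _ dI]) simp
      also have "\<dots> \<le> (\<Sum>i\<in>I. 2 / \<eta> * measure lebesgue (W \<inter> ?B i))"
      proof (rule sum_mono)
        fix i assume "i \<in> I"
        from bd[OF pos[OF this], of "fst i"] \<eta>
        show "measure lebesgue (?B i) \<le> 2 / \<eta> * measure lebesgue (W \<inter> ?B i)"
          by (simp add: field_simps)
      qed
      also have "\<dots> = 2 / \<eta> * measure lebesgue (\<Union>i\<in>I. W \<inter> ?B i)"
        by (subst measure_UNION'[OF I(2) _ dI2]) (auto simp: sum_distrib_left intro: fmeasurable_Int_fmeasurable[OF lmeasurable_ball Wl, simplified Int_commute])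
      also have "\<dots> \<le> 2 / \<eta> * measure lebesgue (G - S)"
      proof (rule mult_left_mono)
        show "measure lebesgue (\<Union>i\<in>I. W \<inter> ?B i) \<le> measure lebesgue (G - S)"
        proof (rule measure_mono_fmeasurable[OF _ _ GSm])
          show "(\<Union>i\<in>I. W \<inter> ?B i) \<subseteq> G - S"
          proof
            fix x assume "x \<in> (\<Union>i\<in>I. W \<inter> ?B i)"
            then obtain i where i: "i \<in> I" "x \<in> W" "x \<in> ?B i" by blast
            then have "i \<in> K" using I C(2) by auto
            then have "?B i \<subseteq> G" unfolding K_def by auto
            then show "x \<in> G - S" using i unfolding S_def by auto
          qed
          show "(\<Union>i\<in>I. W \<inter> ?B i) \<in> sets lebesgue"
            using I(2) Wl by (intro sets.finite_UN sets.Int) (auto intro: fmeasurableD)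
        qed
      qed (use \<eta> in simp)
      also have "\<dots> \<le> 2 / \<eta> * (e * \<eta> / 2)" using GS \<eta> by (intro mult_left_mono) auto
      also have "\<dots> = e" using \<eta> by simp
      finally show ?thesis .
    qed
    have Um: "(\<Union>i\<in>C. ?B i) \<in> lmeasurable"
      by (rule fmeasurable_UN_bound[OF C(1) _ bound]) simp_all
    have Ub: "measure lebesgue (\<Union>i\<in>C. ?B i) \<le> e"
      by (rule measure_UN_bound[OF C(1) _ bound]) simp_all
    define T where "T = (S - (\<Union>i\<in>C. ?B i)) \<union> (\<Union>i\<in>C. ?B i)"
    have Nm: "S - (\<Union>i\<in>C. ?B i) \<in> lmeasurable" using negligible_imp_measurable[OF C(4)] .
    show "\<exists>T. (- W) \<inter> ball 0 (real k) \<subseteq> T \<and> T \<in> lmeasurable \<and> measure lebesgue T \<le> e"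
    proof (intro exI conjI)
      show "(- W) \<inter> ball 0 (real k) \<subseteq> T" unfolding T_def S_def by blast
      show "T \<in> lmeasurable" unfolding T_def using Nm Um by (rule fmeasurable.Un)
      have "measure lebesgue T \<le> measure lebesgue (S - (\<Union>i\<in>C. ?B i)) + measure lebesgue (\<Union>i\<in>C. ?B i)"
        unfolding T_def by (rule measure_Un_le) (use Nm Um in auto)
      then show "measure lebesgue T \<le> e" using negligible_imp_measure0[OF C(4)] Ub by simp
    qed
  qed
  have "- W = \<Union>(range (\<lambda>k. (- W) \<inter> ball 0 (real k)))"
  proof (rule set_eqI, rule iffI)
    fix x assume x: "x \<in> - W"
    obtain n where "\<bar>x\<bar> < real n" using reals_Archimedean2 by blast
    then show "x \<in> \<Union>(range (\<lambda>k. (- W) \<inter> ball 0 (real k)))" using x by (auto simp: dist_real_def)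
  qed auto
  moreover have "negligible (\<Union>(range (\<lambda>k. (- W) \<inter> ball 0 (real k))))"
    by (rule negligible_countable_Union) (use neg in auto)
  ultimately have "negligible (- W)" by simp
  then have "- W \<in> null_sets lebesgue" by (simp add: negligible_iff_null_sets)
  then have "AE x in lebesgue. x \<notin> - W" by (rule AE_not_in)
  then show ?thesis by (simp add: AE_completion_iff)
qed

locale dset =
  fixes Y :: "real set" and r R \<alpha> :: real and \<phi> :: "nat \<Rightarrow> real"
  assumes r: "r > 0" and R: "R > 0" and a1: "\<bar>\<alpha>\<bar> > 1"
    and sepY: "\<forall>y\<in>Y. \<forall>y'\<in>Y. y \<noteq> y' \<longrightarrow> 2 * r \<le> \<bar>y - y'\<bar>"
    and covY: "\<forall>x. \<exists>y\<in>Y. \<bar>y - x\<bar> \<le> R"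
    and \<phi>0: "\<And>n. 0 \<le> \<phi> n" and \<phi>r: "\<And>n. \<phi> n \<le> r / 2"
begin

definition "a = \<bar>\<alpha>\<bar>"
definition "Z n = (\<lambda>y. y / \<alpha> ^ n) ` Y"
definition "E n = nbhd (Z n) (\<phi> n / a ^ n)"

lemma a: "a > 1" unfolding a_def using a1 .
lemma apow: "a ^ n \<ge> 1" "a ^ n > 0" using a by auto
lemma alpha_pow: "\<bar>\<alpha> ^ n\<bar> = a ^ n" "\<alpha> ^ n \<noteq> 0" unfolding a_def using a1 by (auto simp: power_abs)

lemma E_iff: "x \<in> E n \<longleftrightarrow> (\<exists>y\<in>Y. \<bar>\<alpha> ^ n * x - y\<bar> \<le> \<phi> n)"
proof -
  have eq: "\<bar>y / \<alpha> ^ n - x\<bar> = \<bar>\<alpha> ^ n * x - y\<bar> / a ^ n" for y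
  proof -
    have "y / \<alpha> ^ n - x = (y - \<alpha> ^ n * x) / \<alpha> ^ n" using alpha_pow(2) by (simp add: field_simps)
    then have "\<bar>y / \<alpha> ^ n - x\<bar> = \<bar>y - \<alpha> ^ n * x\<bar> / a ^ n" by (simp add: abs_divide alpha_pow(1))
    then show ?thesis by (simp add: abs_minus_commute)
  qed
  have "x \<in> E n \<longleftrightarrow> (\<exists>y\<in>Y. \<bar>y / \<alpha> ^ n - x\<bar> \<le> \<phi> n / a ^ n)"
    unfolding E_def nbhd_def Z_def by (auto simp: dist_real_def)
  also have "\<dots> \<longleftrightarrow> (\<exists>y\<in>Y. \<bar>\<alpha> ^ n * x - y\<bar> \<le> \<phi> n)"
    unfolding eq using apow(2)[of n] a by (simp add: divide_le_cancel)
  finally show ?thesis .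
qed

lemma sepZ: "\<forall>z\<in>Z n. \<forall>w\<in>Z n. z \<noteq> w \<longrightarrow> 2 * r / a ^ n \<le> \<bar>z - w\<bar>"
proof (intro ballI impI)
  fix z w assume z: "z \<in> Z n" and w: "w \<in> Z n" and zw: "z \<noteq> w"
  obtain y y' where y: "y \<in> Y" "z = y / \<alpha> ^ n" and y': "y' \<in> Y" "w = y' / \<alpha> ^ n" using z w unfolding Z_def by auto
  have "y \<noteq> y'" using zw y y' by auto
  then have "2 * r \<le> \<bar>y - y'\<bar>" using sepY y y' by blast
  moreover have "\<bar>z - w\<bar> = \<bar>y - y'\<bar> / a ^ n"
    using y y' alpha_pow by (simp add: diff_divide_distrib[symmetric] abs_divide)
  ultimately show "2 * r / a ^ n \<le> \<bar>z - w\<bar>" using apow(2)[of n] by (simp add: divide_right_mono)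
qed

lemma covZ: "\<forall>x. \<exists>z\<in>Z n. \<bar>z - x\<bar> \<le> R / a ^ n"
proof
  fix x
  obtain y where y: "y \<in> Y" "\<bar>y - \<alpha> ^ n * x\<bar> \<le> R" using covY by blast
  have "\<bar>y / \<alpha> ^ n - x\<bar> = \<bar>y - \<alpha> ^ n * x\<bar> / a ^ n"
  proof -
    have "y / \<alpha> ^ n - x = (y - \<alpha> ^ n * x) / \<alpha> ^ n" using alpha_pow(2) by (simp add: field_simps)
    then show ?thesis by (simp add: abs_divide alpha_pow(1))
  qed
  then have "\<bar>y / \<alpha> ^ n - x\<bar> \<le> R / a ^ n" using y(2) apow(2)[of n] by (simp add: divide_right_mono)
  then show "\<exists>z\<in>Z n. \<bar>z - x\<bar> \<le> R / a ^ n" using y(1) unfolding Z_def by blast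
qed

lemma countable_Y: "countable Y"
proof -
  have "Y = (\<Union>k::nat. Y \<inter> {- real k..real k})"
  proof (rule set_eqI, rule iffI)
    fix y assume y: "y \<in> Y"
    obtain n where "\<bar>y\<bar> < real n" using reals_Archimedean2 by blast
    then have "y \<in> Y \<inter> {- real n..real n}" using y by auto
    then show "y \<in> (\<Union>k::nat. Y \<inter> {- real k..real k})" by blast
  qed auto
  moreover have fin: "finite (Y \<inter> {- real k..real k})" for k :: nat
    using count_upper(1)[OF sepY, of "- real k" "real k"] r by simp
  moreover have "countable (\<Union>k::nat. Y \<inter> {- real k..real k})"
    by (rule countable_UN) (auto intro: countable_finite fin)
  ultimately show ?thesis by simp
qed

lemma E_borel: "E n \<in> sets borel"
proof -
  have "countable (Z n)" unfolding Z_def using countable_Y by simp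
  then show ?thesis unfolding E_def nbhd_def by (intro sets.countable_UN'') auto
qed

end

lemma alg_lower:
  fixes L r R b p :: real
  assumes r: "r > 0" and R: "R > 0" and b: "b > 0" and p: "0 \<le> p" "p \<le> r / 2" and Lb: "2 * r + 6 * R \<le> b * L"
  shows "p * L / (3 * R) \<le> ((L - 2 * (p / b)) / (3 * (R / b)) - 1) * (2 * (p / b))"
proof -
  have eq1: "((L - 2 * (p / b)) / (3 * (R / b)) - 1) * (2 * (p / b)) = p * (2 * (L * b - 2 * p - 3 * R)) / (3 * R * b)"
    using b R by (simp add: field_simps)
  have eq2: "p * L / (3 * R) = p * (L * b) / (3 * R * b)" using b R by (simp add: field_simps)
  have "L * b \<le> 2 * (L * b - 2 * p - 3 * R)" using Lb p by (simp add: algebra_simps)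
  from mult_left_mono[OF this p(1)] have "p * (L * b) \<le> p * (2 * (L * b - 2 * p - 3 * R))" .
  then have "p * (L * b) / (3 * R * b) \<le> p * (2 * (L * b - 2 * p - 3 * R)) / (3 * R * b)"
    using b R by (intro divide_right_mono) auto
  then show ?thesis using eq1 eq2 by simp
qed

lemma alg_upper:
  fixes L r b p :: real
  assumes r: "r > 0" and b: "b \<ge> 1" and p: "0 \<le> p" "p \<le> r / 2" and L: "0 \<le> L"
  shows "((L + 2 * (p / b)) / (2 * r / b) + 1) * (2 * (p / b)) \<le> (L / r + 4) * p"
proof -
  have b0: "b > 0" using b by simp
  have eq: "((L + 2 * (p / b)) / (2 * r / b) + 1) * (2 * (p / b)) = L * p / r + (2 * p / r) * (p / b) + 2 * (p / b)"
    using b0 r by (simp add: field_simps)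
  have pb: "p / b \<le> p" using b p by (simp add: divide_le_eq mult_le_cancel_left1 mult_le_cancel_left)
  have pb0: "0 \<le> p / b" using b0 p by simp
  have "2 * p / r \<le> 1" using p r by (simp add: divide_le_eq)
  then have "(2 * p / r) * (p / b) \<le> 1 * (p / b)" using pb0 by (rule mult_right_mono)
  then have "L * p / r + (2 * p / r) * (p / b) + 2 * (p / b) \<le> L * p / r + 3 * p" using pb by simp
  also have "\<dots> \<le> (L / r + 4) * p" using p by (simp add: algebra_simps)
  finally show ?thesis using eq by simp
qed

lemma alg_pair:
  fixes L r bm bn pm pn :: real
  assumes r: "r > 0" and bm: "bm \<ge> 1" and bn: "bn \<ge> bm" and pm: "0 \<le> pm" "pm \<le> r / 2"
    and pn: "0 \<le> pn" "pn \<le> r / 2" and L: "L \<ge> 0"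
  shows "((L + 2 * (pm / bm)) / (2 * r / bm) + 1) * (((2 * (pm / bm) + 2 * (pn / bn)) / (2 * r / bn) + 1) * (2 * (pn / bn)))
     \<le> L / r^2 * pm * pn + pn * ((2 * L / r + 8) * bm / bn + 2 / bm)"
proof -
  have bm0: "bm > 0" and bn0: "bn > 0" using bm bn by auto
  have X: "(L + 2 * (pm / bm)) / (2 * r / bm) + 1 = L * bm / (2 * r) + pm / r + 1"
    using bm0 r by (simp add: field_simps)
  have Yv: "(2 * (pm / bm) + 2 * (pn / bn)) / (2 * r / bn) + 1 = pm * bn / (r * bm) + pn / r + 1"
    using bm0 bn0 r by (simp add: field_simps)
  have X': "L * bm / (2 * r) + pm / r + 1 \<le> L * bm / (2 * r) + 2"
    using pm r by (simp add: divide_le_eq)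
  have Y': "pm * bn / (r * bm) + pn / r + 1 \<le> pm * bn / (r * bm) + 2"
    using pn r by (simp add: divide_le_eq)
  have P0: "0 \<le> 2 * (pn / bn)" using pn bn0 by simp
  have Y0: "0 \<le> pm * bn / (r * bm) + pn / r + 1" using pm pn r bm0 bn0 by simp
  have X0': "0 \<le> L * bm / (2 * r) + 2" using L r bm0 by simp
  have step1: "(L * bm / (2 * r) + pm / r + 1) * ((pm * bn / (r * bm) + pn / r + 1) * (2 * (pn / bn)))
      \<le> (L * bm / (2 * r) + 2) * ((pm * bn / (r * bm) + 2) * (2 * (pn / bn)))"
    by (intro mult_mono X' mult_right_mono Y' P0 X0' mult_nonneg_nonneg Y0) (use pn pm bn0 bm0 r in simp_all)
  have eq: "(L * bm / (2 * r) + 2) * ((pm * bn / (r * bm) + 2) * (2 * (pn / bn)))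
     = L / r^2 * pm * pn + 2 * L / r * pn * (bm / bn) + (4 * pm / r) * (pn / bm) + 8 * (pn / bn)"
    using bm0 bn0 r by (simp add: field_simps power2_eq_square)
  have t3: "(4 * pm / r) * (pn / bm) \<le> 2 * (pn / bm)"
  proof (rule mult_right_mono)
    show "4 * pm / r \<le> 2" using pm r by (simp add: divide_le_eq)
  qed (use pn bm0 in simp)
  have t4: "pn / bn \<le> pn * (bm / bn)"
  proof -
    have "pn / bn = pn * (1 / bn)" by simp
    also have "\<dots> \<le> pn * (bm / bn)" using pn bm bn0 by (intro mult_left_mono divide_right_mono) auto
    finally show ?thesis .
  qed
  have "L / r^2 * pm * pn + 2 * L / r * pn * (bm / bn) + (4 * pm / r) * (pn / bm) + 8 * (pn / bn)
      \<le> L / r^2 * pm * pn + 2 * L / r * pn * (bm / bn) + 2 * (pn / bm) + 8 * (pn * (bm / bn))"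
    using t3 t4 by simp
  also have "\<dots> = L / r^2 * pm * pn + pn * ((2 * L / r + 8) * bm / bn + 2 / bm)"
    using bm0 bn0 r by (simp add: field_simps)
  finally show ?thesis using step1 eq X Yv by simp
qed

context dset begin

lemma apow_mono: "m \<le> n \<Longrightarrow> a ^ m \<le> a ^ n"
  using a by (simp add: power_increasing)

lemma lowerE:
  assumes uv: "u < v" and big: "2 * r + 6 * R \<le> a ^ n * (v - u)"
  shows "\<phi> n * (v - u) / (3 * R) \<le> measure lborel (E n \<inter> {u..v})"
proof -
  have b: "a ^ n > 0" by (rule apow(2))
  have s: "0 < 2 * r / a ^ n" using r b by simp
  have S: "0 < R / a ^ n" using R b by simp
  have \<rho>: "0 \<le> \<phi> n / a ^ n" using \<phi>0[of n] b by simp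
  have \<rho>s: "2 * (\<phi> n / a ^ n) < 2 * r / a ^ n" using \<phi>r[of n] r b by (simp add: divide_strict_right_mono)
  have "2 * \<phi> n \<le> a ^ n * (v - u)" using \<phi>r[of n] big R r by linarith
  then have "2 * \<phi> n / a ^ n \<le> v - u" using b by (simp add: divide_le_eq mult.commute)
  then have pq: "u + 2 * (\<phi> n / a ^ n) \<le> v" by simp
  have "\<phi> n * (v - u) / (3 * R) \<le> ((v - u - 2 * (\<phi> n / a ^ n)) / (3 * (R / a ^ n)) - 1) * (2 * (\<phi> n / a ^ n))"
    by (rule alg_lower[OF r R b \<phi>0 \<phi>r]) (use big in \<open>simp add: mult.commute\<close>)
  also have "\<dots> \<le> measure lborel (E n \<inter> {u..v})"
    unfolding E_def by (rule meas_lower[OF sepZ s covZ S \<rho> \<rho>s pq])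
  finally show ?thesis .
qed

lemma upperE:
  assumes uv: "u \<le> v"
  shows "measure lborel (E n \<inter> {u..v}) \<le> ((v - u) / r + 4) * \<phi> n"
proof -
  have b: "a ^ n > 0" by (rule apow(2))
  have s: "0 < 2 * r / a ^ n" using r b by simp
  have \<rho>: "0 \<le> \<phi> n / a ^ n" using \<phi>0[of n] b by simp
  have "measure lborel (E n \<inter> {u..v}) \<le> ((v - u + 2 * (\<phi> n / a ^ n)) / (2 * r / a ^ n) + 1) * (2 * (\<phi> n / a ^ n))"
    unfolding E_def by (rule meas_upper[OF sepZ s uv \<rho>])
  also have "\<dots> \<le> ((v - u) / r + 4) * \<phi> n"
    by (rule alg_upper[OF r apow(1) \<phi>0 \<phi>r]) (use uv in simp)
  finally show ?thesis .
qed

lemma pairE: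
  assumes uv: "u \<le> v" and mn: "m < n"
  shows "measure lborel (E m \<inter> E n \<inter> {u..v})
     \<le> (v - u) / r^2 * \<phi> m * \<phi> n + \<phi> n * ((2 * (v - u) / r + 8) * a ^ m / a ^ n + 2 / a ^ m)"
proof -
  have s1: "0 < 2 * r / a ^ m" using r apow(2)[of m] by simp
  have s2: "0 < 2 * r / a ^ n" using r apow(2)[of n] by simp
  have \<rho>1: "0 \<le> \<phi> m / a ^ m" using \<phi>0[of m] apow(2)[of m] by simp
  have \<rho>2: "0 \<le> \<phi> n / a ^ n" using \<phi>0[of n] apow(2)[of n] by simp
  have "measure lborel (E m \<inter> E n \<inter> {u..v}) \<le>
     ((v - u + 2 * (\<phi> m / a ^ m)) / (2 * r / a ^ m) + 1) * (((2 * (\<phi> m / a ^ m) + 2 * (\<phi> n / a ^ n)) / (2 * r / a ^ n) + 1) * (2 * (\<phi> n / a ^ n)))"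
    unfolding E_def by (rule meas_pair[OF sepZ s1 sepZ s2 uv \<rho>1 \<rho>2])
  also have "\<dots> \<le> (v - u) / r^2 * \<phi> m * \<phi> n + \<phi> n * ((2 * (v - u) / r + 8) * a ^ m / a ^ n + 2 / a ^ m)"
    by (rule alg_pair[OF r apow(1) apow_mono \<phi>0 \<phi>r \<phi>0 \<phi>r]) (use uv mn in auto)
  finally show ?thesis .
qed

definition "T L m n = (if m < n then \<phi> n * ((2 * L / r + 8) * a ^ m / a ^ n + 2 / a ^ m) else 0)"
definition "bnd L m n = L / r^2 * \<phi> m * \<phi> n + T L m n + T L n m + (if m = n then (L / r + 4) * \<phi> n else 0)"

lemma T_nonneg: assumes L: "L \<ge> 0" shows "0 \<le> T L m n"
proof -
  have "0 \<le> 2 * L / r + 8" using L r by simp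
  moreover have "0 \<le> a ^ m" "0 < a ^ n" using apow(2)[of m] apow(2)[of n] by auto
  ultimately have "0 \<le> (2 * L / r + 8) * a ^ m / a ^ n + 2 / a ^ m" by simp
  then show ?thesis unfolding T_def using \<phi>0[of n] by simp
qed

lemma allE:
  assumes uv: "u \<le> v"
  shows "measure lborel (E m \<inter> E n \<inter> {u..v}) \<le> bnd (v - u) m n"
proof -
  have L: "0 \<le> v - u" using uv by simp
  have p0: "0 \<le> (v - u) / r^2 * \<phi> m * \<phi> n" using L \<phi>0 r by simp
  consider "m < n" | "m = n" | "n < m" by linarith
  then show ?thesis
  proof cases
    case 1
    then show ?thesis using pairE[OF uv 1] T_nonneg[OF L, of n m] unfolding bnd_def T_def by simp
  next
    case 2
    then show ?thesis using upperE[OF uv, of n] T_nonneg[OF L, of n n] p0 unfolding bnd_def by simp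
  next
    case 3
    have "E m \<inter> E n \<inter> {u..v} = E n \<inter> E m \<inter> {u..v}" by auto
    then have "measure lborel (E m \<inter> E n \<inter> {u..v}) \<le> (v - u) / r^2 * \<phi> n * \<phi> m + \<phi> m * ((2 * (v - u) / r + 8) * a ^ n / a ^ m + 2 / a ^ n)"
      using pairE[OF uv 3] by simp
    then show ?thesis using 3 T_nonneg[OF L, of m n] unfolding bnd_def T_def by (simp add: algebra_simps)
  qed
qed

end

context dset begin

lemma geom1: "(\<Sum>m<n. a ^ m) \<le> a ^ n / (a - 1)"
proof -
  have "(\<Sum>m<n. a ^ m) = (1 - a ^ n) / (1 - a)" using a by (simp add: sum_gp_strict)
  also have "\<dots> = (a ^ n - 1) / (a - 1)" using a by (simp add: field_simps)
  also have "\<dots> \<le> a ^ n / (a - 1)" using a by (simp add: divide_right_mono)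
  finally show ?thesis .
qed

lemma geom2: "(\<Sum>m<n. 1 / a ^ m) \<le> a / (a - 1)"
proof -
  have ia: "1 / a \<noteq> 1" using a by simp
  have "(\<Sum>m<n. 1 / a ^ m) = (\<Sum>m<n. (1 / a) ^ m)" by (simp add: power_one_over)
  also have "\<dots> = (1 - (1 / a) ^ n) / (1 - 1 / a)" by (simp only: sum_gp_strict[of "1 / a" n] if_not_P[OF ia])
  also have "\<dots> \<le> 1 / (1 - 1 / a)"
  proof (rule divide_right_mono)
    show "1 - (1 / a) ^ n \<le> 1" using a by simp
    show "0 \<le> 1 - 1 / a" using a by simp
  qed
  also have "\<dots> = a / (a - 1)" using a by (simp add: field_simps)
  finally show ?thesis .
qed

definition "D L = (2 * L / r + 8) / (a - 1) + 2 * a / (a - 1)"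

lemma D_nonneg: "L \<ge> 0 \<Longrightarrow> D L \<ge> 0"
  unfolding D_def using a r by simp

lemma sumT:
  assumes J: "finite J" and L: "L \<ge> 0"
  shows "(\<Sum>m\<in>J. T L m n) \<le> \<phi> n * D L"
proof -
  define c where "c = (2 * L / r + 8) / a ^ n"
  define f where "f m = \<phi> n * (c * a ^ m + 2 * (1 / a ^ m))" for m
  have f0: "0 \<le> f m" for m
    using T_nonneg[OF L, of m "Suc (max m n)"] \<phi>0[of n] apow(2)[of m] apow(2)[of n] L r
    unfolding f_def c_def by (intro mult_nonneg_nonneg add_nonneg_nonneg divide_nonneg_pos) auto
  have feq: "\<phi> n * ((2 * L / r + 8) * a ^ m / a ^ n + 2 / a ^ m) = f m" for m
    unfolding f_def c_def using apow(2)[of n] apow(2)[of m] by (simp add: field_simps)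
  have "(\<Sum>m\<in>J. T L m n) = (\<Sum>m\<in>J. if m < n then f m else 0)" unfolding T_def feq by simp
  also have "\<dots> = (\<Sum>m\<in>{m\<in>J. m < n}. f m)" using J by (simp add: sum.inter_filter)
  also have "\<dots> \<le> (\<Sum>m<n. f m)" by (rule sum_mono2) (use f0 in auto)
  also have "\<dots> = \<phi> n * (c * (\<Sum>m<n. a ^ m) + 2 * (\<Sum>m<n. 1 / a ^ m))"
    unfolding f_def distrib_left by (simp only: sum.distrib sum_distrib_left)
  also have "\<dots> \<le> \<phi> n * (c * (a ^ n / (a - 1)) + 2 * (a / (a - 1)))"
  proof (intro mult_left_mono add_mono geom1 geom2)
    show "0 \<le> c" unfolding c_def using L r apow(2)[of n] by simp
  qed (use \<phi>0 in auto)
  also have "\<dots> = \<phi> n * D L" unfolding D_def c_def using apow(2)[of n] a by simp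
  finally show ?thesis .
qed

lemma total_bound:
  assumes J: "finite J" and L: "L \<ge> 0"
  shows "(\<Sum>m\<in>J. \<Sum>n\<in>J. bnd L m n) \<le> L / r^2 * (\<Sum>n\<in>J. \<phi> n)^2 + (2 * D L + L / r + 4) * (\<Sum>n\<in>J. \<phi> n)"
proof -
  have e1: "(\<Sum>m\<in>J. \<Sum>n\<in>J. L / r^2 * \<phi> m * \<phi> n) = L / r^2 * (\<Sum>n\<in>J. \<phi> n)^2"
    unfolding power2_eq_square sum_product by (simp add: sum_distrib_left mult.assoc)
  have e2: "(\<Sum>m\<in>J. \<Sum>n\<in>J. T L m n) \<le> (\<Sum>n\<in>J. \<phi> n * D L)"
  proof -
    have "(\<Sum>m\<in>J. \<Sum>n\<in>J. T L m n) = (\<Sum>n\<in>J. \<Sum>m\<in>J. T L m n)" by (rule sum.swap)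
    also have "\<dots> \<le> (\<Sum>n\<in>J. \<phi> n * D L)" by (intro sum_mono sumT[OF J L])
    finally show ?thesis .
  qed
  have e3: "(\<Sum>m\<in>J. \<Sum>n\<in>J. T L n m) \<le> (\<Sum>m\<in>J. \<phi> m * D L)"
    by (intro sum_mono sumT[OF J L])
  have e4: "(\<Sum>m\<in>J. \<Sum>n\<in>J. (if m = n then (L / r + 4) * \<phi> n else 0)) = (\<Sum>m\<in>J. (L / r + 4) * \<phi> m)"
    using J by simp
  have "(\<Sum>m\<in>J. \<Sum>n\<in>J. bnd L m n) = (\<Sum>m\<in>J. \<Sum>n\<in>J. L / r^2 * \<phi> m * \<phi> n) + (\<Sum>m\<in>J. \<Sum>n\<in>J. T L m n)
      + (\<Sum>m\<in>J. \<Sum>n\<in>J. T L n m) + (\<Sum>m\<in>J. \<Sum>n\<in>J. (if m = n then (L / r + 4) * \<phi> n else 0))"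
    unfolding bnd_def by (simp add: sum.distrib)
  also have "\<dots> \<le> L / r^2 * (\<Sum>n\<in>J. \<phi> n)^2 + (\<Sum>n\<in>J. \<phi> n * D L) + (\<Sum>m\<in>J. \<phi> m * D L) + (\<Sum>m\<in>J. (L / r + 4) * \<phi> m)"
    using e1 e2 e3 e4 by linarith
  also have "\<dots> = L / r^2 * (\<Sum>n\<in>J. \<phi> n)^2 + (2 * D L + L / r + 4) * (\<Sum>n\<in>J. \<phi> n)"
    unfolding sum_distrib_right[symmetric] sum_distrib_left[symmetric] by (simp add: algebra_simps)
  finally show ?thesis .
qed

end

lemma alg_final:
  fixes L S R r C :: real
  assumes L: "L > 0" and S: "S > 0" and R: "R > 0" and r: "r > 0" and C: "C \<ge> 0"
    and big: "C * r^2 / L \<le> S"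
  shows "r^2 / (18 * R^2) * L \<le> (L * S / (3 * R))^2 / (L / r^2 * S^2 + C * S)"
proof -
  have "C * r^2 \<le> S * L" using big L by (simp add: divide_le_eq)
  then have "C * S * r^2 \<le> L * S^2"
    using S by (simp add: power2_eq_square algebra_simps mult_left_mono)
  then have CS: "C * S \<le> L / r^2 * S^2" using r by (simp add: field_simps)
  have pos: "0 < L / r^2 * S^2" using L S r by simp
  have B2: "L / r^2 * S^2 + C * S \<le> 2 * (L / r^2 * S^2)" using CS by simp
  have B2pos: "0 < L / r^2 * S^2 + C * S" using pos C S by (simp add: add_pos_nonneg)
  have "(L * S / (3 * R))^2 / (2 * (L / r^2 * S^2)) \<le> (L * S / (3 * R))^2 / (L / r^2 * S^2 + C * S)"
    by (rule divide_left_mono[OF B2 _ mult_pos_pos]) (use B2pos pos in auto)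
  moreover have "(L * S / (3 * R))^2 / (2 * (L / r^2 * S^2)) = r^2 / (18 * R^2) * L"
    using L S R r by (simp add: field_simps power2_eq_square)
  ultimately show ?thesis by simp
qed

context dset begin

lemma unbounded_partial:
  assumes ns: "\<not> summable \<phi>"
  shows "\<exists>N. X \<le> (\<Sum>n\<in>{K..N}. \<phi> n)"
proof (rule ccontr)
  assume "\<not> ?thesis"
  then have lt: "(\<Sum>n\<in>{K..N}. \<phi> n) < X" for N by (meson not_le)
  have "(\<Sum>i<n. \<phi> i) \<le> (\<Sum>i<K. \<phi> i) + X" for n
  proof -
    have "{..<n} \<subseteq> {..<K} \<union> {K..n}" by auto
    then have "(\<Sum>i<n. \<phi> i) \<le> (\<Sum>i\<in>{..<K} \<union> {K..n}. \<phi> i)"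
      by (intro sum_mono2) (auto simp: \<phi>0)
    also have "\<dots> = (\<Sum>i<K. \<phi> i) + (\<Sum>i\<in>{K..n}. \<phi> i)"
      by (rule sum.union_disjoint) auto
    also have "\<dots> \<le> (\<Sum>i<K. \<phi> i) + X" using lt[of n] by simp
    finally show ?thesis .
  qed
  then have "summable \<phi>" by (intro summableI_nonneg_bounded[OF \<phi>0]) 
  with ns show False by simp
qed

lemma tail_bound:
  assumes ns: "\<not> summable \<phi>" and uv: "u < v"
  shows "r^2 / (18 * R^2) * (v - u) \<le> measure lborel ((\<Union>n\<in>{K..}. E n) \<inter> {u..v})"
proof -
  define L where "L = v - u"
  have L: "L > 0" unfolding L_def using uv by simp
  obtain n0 where n0: "(2 * r + 6 * R) / L < a ^ n0" using real_arch_pow[OF a] by blast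
  define K' where "K' = max K n0"
  have bigA: "2 * r + 6 * R \<le> a ^ n * (v - u)" if "K' \<le> n" for n
  proof -
    have "a ^ n0 \<le> a ^ n" using that unfolding K'_def by (intro apow_mono) simp
    then have "(2 * r + 6 * R) / L \<le> a ^ n" using n0 by simp
    then show ?thesis using L unfolding L_def by (simp add: divide_le_eq)
  qed
  define C where "C = 2 * D L + L / r + 4"
  have "0 < L / r" using L r by simp
  then have C: "C > 0" unfolding C_def using D_nonneg[of L] L by linarith
  obtain N where N: "C * r^2 / L \<le> (\<Sum>n\<in>{K'..N}. \<phi> n)" using unbounded_partial[OF ns] by blast
  define J where "J = {K'..N}"
  define S where "S = (\<Sum>n\<in>J. \<phi> n)"
  have J: "finite J" unfolding J_def by simp
  have "0 < C * r^2 / L" using C r L by simp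
  then have S: "S > 0" using N unfolding S_def J_def by linarith
  define A where "A n = E n \<inter> {u..v}" for n
  have fmA: "A n \<in> fmeasurable lborel" for n
  proof -
    have "{u..v} \<in> fmeasurable lborel" by (simp add: fmeasurable_def emeasure_lborel_Icc_eq)
    then show ?thesis unfolding A_def using fmeasurable_Int_fmeasurable[of "{u..v}" lborel "E n"] E_borel
      by (simp add: Int_commute)
  qed
  have B1: "L * S / (3 * R) \<le> (\<Sum>n\<in>J. measure lborel (A n))"
  proof -
    have "L * S / (3 * R) = (\<Sum>n\<in>J. \<phi> n * (v - u) / (3 * R))"
      unfolding S_def L_def sum_divide_distrib[symmetric] sum_distrib_right[symmetric] by (simp add: mult.commute)
    also have "\<dots> \<le> (\<Sum>n\<in>J. measure lborel (A n))"
      unfolding A_def by (intro sum_mono lowerE[OF uv] bigA) (simp add: J_def)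
    finally show ?thesis .
  qed
  have B2: "(\<Sum>m\<in>J. \<Sum>n\<in>J. measure lborel (A m \<inter> A n)) \<le> L / r^2 * S^2 + C * S"
  proof -
    have "(\<Sum>m\<in>J. \<Sum>n\<in>J. measure lborel (A m \<inter> A n)) \<le> (\<Sum>m\<in>J. \<Sum>n\<in>J. bnd L m n)"
    proof (intro sum_mono)
      fix m n
      have "A m \<inter> A n = E m \<inter> E n \<inter> {u..v}" unfolding A_def by auto
      then show "measure lborel (A m \<inter> A n) \<le> bnd L m n" using allE[of u v m n] uv unfolding L_def by simp
    qed
    also have "\<dots> \<le> L / r^2 * S^2 + C * S"
      unfolding S_def C_def by (rule total_bound[OF J]) (use L in simp)
    finally show ?thesis .
  qed
  have "(L * S / (3 * R))^2 / (L / r^2 * S^2 + C * S) \<le> measure lborel (\<Union>n\<in>J. A n)"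
    by (rule chung_erdos[OF J fmA _ B1 B2]) (use L S R in simp)
  moreover have "r^2 / (18 * R^2) * L \<le> (L * S / (3 * R))^2 / (L / r^2 * S^2 + C * S)"
    by (rule alg_final[OF L S R r]) (use C N in \<open>simp_all add: S_def J_def\<close>)
  moreover have "measure lborel (\<Union>n\<in>J. A n) \<le> measure lborel ((\<Union>n\<in>{K..}. E n) \<inter> {u..v})"
  proof (rule measure_mono_fmeasurable)
    show "(\<Union>n\<in>J. A n) \<subseteq> (\<Union>n\<in>{K..}. E n) \<inter> {u..v}" unfolding A_def J_def K'_def by auto
    have "A n \<in> sets lborel" for n using fmA[of n] by (rule fmeasurableD)
    then show "(\<Union>n\<in>J. A n) \<in> sets lborel" using J by (intro sets.finite_UN) auto
    have "{u..v} \<in> fmeasurable lborel" by (simp add: fmeasurable_def emeasure_lborel_Icc_eq)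
    have "(\<Union>n\<in>{K..}. E n) \<in> sets lborel" using E_borel by (intro sets.countable_UN'') auto
    then have "{u..v} \<inter> (\<Union>n\<in>{K..}. E n) \<in> fmeasurable lborel"
      using fmeasurable_Int_fmeasurable[OF \<open>{u..v} \<in> fmeasurable lborel\<close>] by simp
    then show "(\<Union>n\<in>{K..}. E n) \<inter> {u..v} \<in> fmeasurable lborel" by (simp add: Int_commute)
  qed
  ultimately show ?thesis unfolding L_def by linarith
qed

end

context dset begin

definition "Wset = (\<Inter>K. \<Union>n\<in>{K..}. E n)"

lemma UE_borel: "(\<Union>n\<in>{K..}. E n) \<in> sets borel"
  using E_borel by (intro sets.countable_UN'') auto

lemma W_borel: "Wset \<in> sets borel"
  unfolding Wset_def using UE_borel by (intro sets.countable_INT) auto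

lemma W_bound:
  assumes ns: "\<not> summable \<phi>" and uv: "u < v"
  shows "r^2 / (18 * R^2) * (v - u) \<le> measure lborel (Wset \<inter> {u..v})"
proof -
  define B where "B K = (\<Union>n\<in>{K..}. E n) \<inter> {u..v}" for K
  have eq: "Wset \<inter> {u..v} = (\<Inter>K. B K)" unfolding Wset_def B_def by auto
  have Bs: "range B \<subseteq> sets lborel" unfolding B_def using UE_borel by auto
  have dec: "decseq B" unfolding B_def decseq_def by (auto intro: order_trans)
  have fin: "emeasure lborel (B K) \<noteq> \<infinity>" for K
  proof -
    have "emeasure lborel (B K) \<le> emeasure lborel {u..v}" unfolding B_def by (rule emeasure_mono) auto
    then show ?thesis by (auto simp: emeasure_lborel_Icc_eq top_unique)
  qed
  have lim: "(\<lambda>K. measure lborel (B K)) \<longlonglongrightarrow> measure lborel (\<Inter>K. B K)"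
    by (rule Lim_measure_decseq[OF Bs dec fin])
  have "r^2 / (18 * R^2) * (v - u) \<le> measure lborel (\<Inter>K. B K)"
    by (rule LIMSEQ_le_const[OF lim]) (use tail_bound[OF ns uv] in \<open>auto simp: B_def\<close>)
  then show ?thesis using eq by simp
qed

lemma W_ae:
  assumes ns: "\<not> summable \<phi>"
  shows "AE x in lborel. x \<in> Wset"
proof (rule density_ae[OF W_borel])
  show "0 < r^2 / (18 * R^2)" using r R by simp
  show "\<And>u v. u < v \<Longrightarrow> r^2 / (18 * R^2) * (v - u) \<le> measure lborel (Wset \<inter> {u..v})"
    by (rule W_bound[OF ns])
qed

lemma W_infinite:
  assumes "x \<in> Wset"
  shows "infinite {n. x \<in> E n}"
  unfolding infinite_nat_iff_unbounded_le using assms unfolding Wset_def by auto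

end

context dset begin

definition "Eg g n = nbhd (Z n) (g n / a ^ n)"

lemma Eg_iff: "x \<in> Eg g n \<longleftrightarrow> (\<exists>y\<in>Y. \<bar>\<alpha> ^ n * x - y\<bar> \<le> g n)"
proof -
  have eq: "\<bar>y / \<alpha> ^ n - x\<bar> = \<bar>\<alpha> ^ n * x - y\<bar> / a ^ n" for y
  proof -
    have "y / \<alpha> ^ n - x = (y - \<alpha> ^ n * x) / \<alpha> ^ n" using alpha_pow(2) by (simp add: field_simps)
    then have "\<bar>y / \<alpha> ^ n - x\<bar> = \<bar>y - \<alpha> ^ n * x\<bar> / a ^ n" by (simp add: abs_divide alpha_pow(1))
    then show ?thesis by (simp add: abs_minus_commute)
  qed
  have "x \<in> Eg g n \<longleftrightarrow> (\<exists>y\<in>Y. \<bar>y / \<alpha> ^ n - x\<bar> \<le> g n / a ^ n)"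
    unfolding Eg_def nbhd_def Z_def by (auto simp: dist_real_def)
  also have "\<dots> \<longleftrightarrow> (\<exists>y\<in>Y. \<bar>\<alpha> ^ n * x - y\<bar> \<le> g n)"
    unfolding eq using apow(2)[of n] a by (simp add: divide_le_cancel)
  finally show ?thesis .
qed

lemma Eg_borel: "Eg g n \<in> sets borel"
proof -
  have "countable (Z n)" unfolding Z_def using countable_Y by simp
  then show ?thesis unfolding Eg_def nbhd_def by (intro sets.countable_UN'') auto
qed

lemma Eg_upper:
  assumes uv: "u \<le> v" and g: "0 \<le> g n" "g n \<le> B"
  shows "measure lborel (Eg g n \<inter> {u..v}) \<le> g n * ((v - u) / r + 2 * B / r + 2)"
proof -
  have b: "a ^ n > 0" "a ^ n \<ge> 1" using apow by auto
  have s: "0 < 2 * r / a ^ n" using r b by simp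
  have \<rho>: "0 \<le> g n / a ^ n" using g b by simp
  have "measure lborel (Eg g n \<inter> {u..v}) \<le> ((v - u + 2 * (g n / a ^ n)) / (2 * r / a ^ n) + 1) * (2 * (g n / a ^ n))"
    unfolding Eg_def by (rule meas_upper[OF sepZ s uv \<rho>])
  also have "\<dots> = (v - u) * g n / r + 2 * (g n / r) * (g n / a ^ n) + 2 * (g n / a ^ n)"
    using b r a by (simp add: field_simps)
  also have "\<dots> \<le> (v - u) * g n / r + 2 * (B / r) * g n + 2 * g n"
  proof -
    have gb: "g n / a ^ n \<le> g n" using g b by (simp add: divide_le_eq mult_le_cancel_left1)
    have "g n / r \<le> B / r" using g r by (simp add: divide_right_mono)
    moreover have "0 \<le> g n / a ^ n" using \<rho> .
    ultimately have "(g n / r) * (g n / a ^ n) \<le> (B / r) * g n"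
      using gb g r by (intro mult_mono) auto
    then show ?thesis using gb by simp
  qed
  also have "\<dots> = g n * ((v - u) / r + 2 * B / r + 2)" by (simp add: field_simps)
  finally show ?thesis .
qed

lemma conv_part:
  fixes g :: "nat \<Rightarrow> real"
  assumes g0: "\<And>n. 0 \<le> g n" and sg: "summable g"
  shows "AE x in lborel. finite {n. x \<in> Eg g n}"
proof -
  define B where "B = suminf g"
  have gB: "g n \<le> B" for n
  proof -
    have "sum g {n} \<le> suminf g" by (rule sum_le_suminf[OF sg]) (auto simp: g0)
    then show ?thesis unfolding B_def by simp
  qed
  have ae: "AE x in lborel. eventually (\<lambda>n. x \<in> space lborel - (Eg g n \<inter> {- real M..real M})) sequentially" for M :: nat
  proof (rule borel_cantelli_AE1)
    show "Eg g n \<inter> {- real M..real M} \<in> sets lborel" for n using Eg_borel by simp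
    show "emeasure lborel (Eg g n \<inter> {- real M..real M}) < \<infinity>" for n
    proof -
      have "emeasure lborel (Eg g n \<inter> {- real M..real M}) \<le> emeasure lborel {- real M..real M}"
        by (rule emeasure_mono) auto
      then show ?thesis by (simp add: emeasure_lborel_Icc_eq) (meson ennreal_less_top le_less_trans)
    qed
    show "summable (\<lambda>n. measure lborel (Eg g n \<inter> {- real M..real M}))"
    proof (rule summable_comparison_test)
      show "summable (\<lambda>n. g n * ((real M - - real M) / r + 2 * B / r + 2))" by (rule summable_mult2[OF sg])
      show "\<exists>N. \<forall>n\<ge>N. norm (measure lborel (Eg g n \<inter> {- real M..real M})) \<le> g n * ((real M - - real M) / r + 2 * B / r + 2)"
        using Eg_upper[of "- real M" "real M" g _ B] g0 gB by auto
    qed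
  qed
  then have "AE x in lborel. \<forall>M::nat. eventually (\<lambda>n. x \<in> space lborel - (Eg g n \<inter> {- real M..real M})) sequentially"
    by (simp add: AE_all_countable)
  then show ?thesis
  proof (rule AE_mp, intro AE_I2 impI)
    fix x assume H: "\<forall>M::nat. eventually (\<lambda>n. x \<in> space lborel - (Eg g n \<inter> {- real M..real M})) sequentially"
    obtain M :: nat where M: "\<bar>x\<bar> \<le> real M" using real_arch_simple by blast
    have "eventually (\<lambda>n. x \<notin> Eg g n) sequentially"
      by (rule eventually_mono[OF H[rule_format, of M]]) (use M in auto)
    then obtain N where "\<forall>n\<ge>N. x \<notin> Eg g n" by (auto simp: eventually_sequentially)
    then have "{n. x \<in> Eg g n} \<subseteq> {..<N}" by (auto simp: not_le[symmetric])
    then show "finite {n. x \<in> Eg g n}" by (rule finite_subset) simp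
  qed
qed

end

theorem mainTheorem1:
  fixes Y :: "real set" and \<psi> :: "nat \<Rightarrow> real" and \<alpha> :: real
  assumes "delone Y"
    and "\<And>n. n \<ge> 1 \<Longrightarrow> \<psi> n \<ge> 0"
    and "\<bar>\<alpha>\<bar> > 1"
  shows "(summable (\<lambda>n. \<psi> (Suc n)) \<longrightarrow>
           (AE x in lborel. finite (approx_pairs Y \<psi> \<alpha> x)))
       \<and> (\<not> summable (\<lambda>n. \<psi> (Suc n)) \<longrightarrow>
           (AE x in lborel. infinite (approx_pairs Y \<psi> \<alpha> x)))"
proof -
  note del = assms(1) and \<psi>0 = assms(2) and a1 = assms(3)
  obtain r0 where r0: "r0 > 0" and sep0: "\<forall>y\<in>Y. \<forall>y'\<in>Y. y \<noteq> y' \<longrightarrow> 2 * r0 \<le> \<bar>y - y'\<bar>"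
    using del unfolding delone_def uniformly_discrete_def by (auto simp: dist_real_def)
  obtain R0 where R0: "R0 > 0" and cov0: "\<forall>x. \<exists>y\<in>Y. \<bar>y - x\<bar> \<le> R0"
  proof -
    obtain R0 where R0: "R0 > 0" and c: "\<forall>z. cball z R0 \<inter> Y \<noteq> {}"
      using del unfolding delone_def relatively_dense_def by auto
    have "\<exists>y\<in>Y. \<bar>y - x\<bar> \<le> R0" for x
    proof -
      obtain y where "y \<in> cball x R0" "y \<in> Y" using c[rule_format, of x] by blast
      then show ?thesis by (auto simp: dist_real_def abs_minus_commute)
    qed
    then show ?thesis using that R0 by blast
  qed
  define g where "g n = (if n = 0 then 0 else \<psi> n)" for n
  have g0: "0 \<le> g n" for n unfolding g_def using \<psi>0[of n] by simp
  define \<phi> where "\<phi> n = (if n = 0 then 0 else min (\<psi> n) (r0 / 2))" for n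
  have \<phi>0: "0 \<le> \<phi> n" for n unfolding \<phi>_def using \<psi>0[of n] r0 by simp
  have \<phi>r: "\<phi> n \<le> r0 / 2" for n unfolding \<phi>_def using r0 min.cobounded2[of "\<psi> n" "r0 / 2"] by auto
  interpret dset Y r0 R0 \<alpha> \<phi>
    by unfold_locales (use r0 R0 a1 sep0 cov0 \<phi>0 \<phi>r in auto)
  have fin_slice: "finite (Y \<inter> {c - d..c + d})" if "0 \<le> d" for c d
    using count_upper(1)[OF sepY, of "c - d" "c + d"] r0 that by simp
  show ?thesis
  proof (intro conjI impI)
    assume s: "summable (\<lambda>n. \<psi> (Suc n))"
    have "summable (\<lambda>n. g (Suc n))" using s unfolding g_def by simp
    then have sg: "summable g" by (simp add: summable_Suc_iff)
    show "AE x in lborel. finite (approx_pairs Y \<psi> \<alpha> x)"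
    proof (rule AE_mp[OF conv_part[OF g0 sg]], intro AE_I2 impI)
      fix x assume fx: "finite {n. x \<in> Eg g n}"
      have "approx_pairs Y \<psi> \<alpha> x \<subseteq> (\<Union>n\<in>{n. x \<in> Eg g n}. {n} \<times> (Y \<inter> {\<alpha> ^ n * x - g n..\<alpha> ^ n * x + g n}))"
      proof
        fix p assume "p \<in> approx_pairs Y \<psi> \<alpha> x"
        then obtain n y where p: "p = (n, y)" "n \<ge> 1" "y \<in> Y" "\<bar>\<alpha> ^ n * x - y\<bar> \<le> \<psi> n"
          unfolding approx_pairs_def by auto
        have gn: "g n = \<psi> n" using p(2) unfolding g_def by simp
        have "x \<in> Eg g n" unfolding Eg_iff using p gn by auto
        moreover have "y \<in> Y \<inter> {\<alpha> ^ n * x - g n..\<alpha> ^ n * x + g n}" using p gn by (auto simp: abs_le_iff)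
        ultimately show "p \<in> (\<Union>n\<in>{n. x \<in> Eg g n}. {n} \<times> (Y \<inter> {\<alpha> ^ n * x - g n..\<alpha> ^ n * x + g n}))"
          using p(1) by blast
      qed
      moreover have "finite (\<Union>n\<in>{n. x \<in> Eg g n}. {n} \<times> (Y \<inter> {\<alpha> ^ n * x - g n..\<alpha> ^ n * x + g n}))"
        using fx fin_slice g0 by (intro finite_UN_I) auto
      ultimately show "finite (approx_pairs Y \<psi> \<alpha> x)" by (rule finite_subset)
    qed
  next
    assume ns: "\<not> summable (\<lambda>n. \<psi> (Suc n))"
    have nsp: "\<not> summable \<phi>"
    proof
      assume "summable \<phi>"
      then have sp: "summable (\<lambda>n. \<phi> (Suc n))" by (simp add: summable_Suc_iff)
      then have "(\<lambda>n. \<phi> (Suc n)) \<longlonglongrightarrow> 0" by (rule summable_LIMSEQ_zero)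
      then have "eventually (\<lambda>n. \<phi> (Suc n) < r0 / 2) sequentially"
        using r0 by (intro order_tendstoD) auto
      then have "eventually (\<lambda>n. \<phi> (Suc n) = \<psi> (Suc n)) sequentially"
        by (rule eventually_mono) (auto simp: \<phi>_def min_def split: if_splits)
      then have "summable (\<lambda>n. \<phi> (Suc n)) = summable (\<lambda>n. \<psi> (Suc n))" by (rule summable_cong)
      with sp ns show False by simp
    qed
    show "AE x in lborel. infinite (approx_pairs Y \<psi> \<alpha> x)"
    proof (rule AE_mp[OF W_ae[OF nsp]], intro AE_I2 impI)
      fix x assume "x \<in> Wset"
      then have inf: "infinite {n. x \<in> E n}" by (rule W_infinite)
      have "{n. x \<in> E n} \<subseteq> insert 0 (fst ` approx_pairs Y \<psi> \<alpha> x)"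
      proof
        fix n assume "n \<in> {n. x \<in> E n}"
        then obtain y where y: "y \<in> Y" "\<bar>\<alpha> ^ n * x - y\<bar> \<le> \<phi> n" unfolding E_iff by auto
        show "n \<in> insert 0 (fst ` approx_pairs Y \<psi> \<alpha> x)"
        proof (cases "n = 0")
          case False
          then have "\<phi> n \<le> \<psi> n" unfolding \<phi>_def by simp
          then have "(n, y) \<in> approx_pairs Y \<psi> \<alpha> x" using y False unfolding approx_pairs_def by auto
          then show ?thesis by force
        qed simp
      qed
      then show "infinite (approx_pairs Y \<psi> \<alpha> x)" using inf finite_subset by blast
    qed
  qed
qed

end
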